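(* Let $n\ge3$ with $n\equiv 3\pmod 4$ and let $D_{2n}=\langle a,b\mid a^n=b^2=1,\ ba=a^{-1}b\rangle$ be the dihedral group of order $2n$. Then the sequence $S=a^{[(n-1)/2]}\boldsymbol{\cdot}b^{[2]}$ lies in $\mathsf q(\mathcal B(D_{2n}))\setminus\mathcal B(D_{2n})$ while $S^{[2]},S^{[3]}\in\mathcal B(D_{2n})$; consequently, if a finite group $G$ contains a subgroup isomorphic to $D_{2n}$, then $\mathcal B(G)$ is not seminormal.
   Context: For a finite group $G$ (multiplicative, identity $1_G$) and $G_0\subset G$, $\mathcal F(G_0)$ is the free abelian monoid with basis $G_0$ (sequences $S=g_1\boldsymbol{\cdot}\ldots\boldsymbol{\cdot}g_\ell$, operation $\boldsymbol{\cdot}$ = concatenation; $g^{[k]}$ and $S^{[k]}$ denote $k$-fold products). $\pi(S)=\{g_{\tau(1)}\cdots g_{\tau(\ell)}:\tau\text{ a permutation of }[1,\ell]\}$ and $\mathcal B(G_0)=\{S\in\mathcal F(G_0):1_G\in\pi(S)\}$. $\mathsf q(H)$ is the quotient group of a monoid $H$. A monoid $H$ is seminormal if $x\in\mathsf q(H)$ and $x^2,x^3\in H$ imply $x\in H$. *)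

theory Defs
  imports "HOL-Algebra.Algebra" "HOL-Library.Multiset"
begin

text \<open>Sequences over a group are finite multisets of elements.
  \<open>\<pi>(S) \<ni> 1\<close> iff some ordering (a list with multiset S) multiplies to the identity.\<close>

definition seq_prod :: "('a, 'b) monoid_scheme \<Rightarrow> 'a list \<Rightarrow> 'a" where
  "seq_prod G xs = foldr (\<lambda>x y. x \<otimes>\<^bsub>G\<^esub> y) xs \<one>\<^bsub>G\<^esub>"

definition prod_set :: "('a, 'b) monoid_scheme \<Rightarrow> 'a multiset \<Rightarrow> 'a set" where
  "prod_set G S = {seq_prod G xs | xs. mset xs = S}"

definition BB :: "('a, 'b) monoid_scheme \<Rightarrow> 'a multiset set" where
  "BB G = {S. set_mset S \<subseteq> carrier G \<and> \<one>\<^bsub>G\<^esub> \<in> prod_set G S}"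

text \<open>Embedding of sequences into the free abelian group (finitely supported
  integer-valued functions).\<close>
definition emb :: "'a multiset \<Rightarrow> ('a \<Rightarrow> int)" where
  "emb S = (\<lambda>g. int (count S g))"

text \<open>Quotient group of a submonoid H of the free abelian monoid,
  realised inside the free abelian group: all differences.\<close>
definition qgrp :: "'a multiset set \<Rightarrow> ('a \<Rightarrow> int) set" where
  "qgrp H = {(\<lambda>g. emb A g - emb B g) | A B. A \<in> H \<and> B \<in> H}"

definition seminormal :: "'a multiset set \<Rightarrow> bool" where
  "seminormal H \<longleftrightarrow> (\<forall>x \<in> qgrp H.
      (\<lambda>g. 2 * x g) \<in> emb ` H \<and> (\<lambda>g. 3 * x g) \<in> emb ` H \<longrightarrow> x \<in> emb ` H)"

text \<open>Dihedral group of order 2n: (i, s) stands for \<open>a^i b^s\<close>.\<close>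
definition dihedral :: "nat \<Rightarrow> (nat \<times> bool) monoid" where
  "dihedral n = \<lparr> carrier = {0..<n} \<times> UNIV,
     monoid.mult = (\<lambda>(i, s) (j, t). ((if s then i + n - j else i + j) mod n, s \<noteq> t)),
     monoid.one = (0, False) \<rparr>"

definition dih_a :: "nat \<Rightarrow> nat \<times> bool" where "dih_a n = (1 mod n, False)"
definition dih_b :: "nat \<times> bool" where "dih_b = (0, True)"

end

theory Submission
  imports Defs
begin

lemma seq_prod_Cons: "seq_prod G (x # xs) = x \<otimes>\<^bsub>G\<^esub> seq_prod G xs"
  by (simp add: seq_prod_def)

lemma seq_prod_Nil: "seq_prod G [] = \<one>\<^bsub>G\<^esub>"
  by (simp add: seq_prod_def)

lemma BB_intro:
  assumes "set_mset S \<subseteq> carrier G" "mset xs = S" "seq_prod G xs = \<one>\<^bsub>G\<^esub>"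
  shows "S \<in> BB G"
proof -
  have "\<one>\<^bsub>G\<^esub> \<in> prod_set G S" unfolding prod_set_def using assms(2,3) by force
  then show ?thesis using assms(1) by (simp add: BB_def)
qed

lemma seq_prod_hom:
  assumes h: "h \<in> hom K L" and h1: "h \<one>\<^bsub>K\<^esub> = \<one>\<^bsub>L\<^esub>"
    and cl: "\<And>x y. x \<in> carrier K \<Longrightarrow> y \<in> carrier K \<Longrightarrow> x \<otimes>\<^bsub>K\<^esub> y \<in> carrier K"
    and one: "\<one>\<^bsub>K\<^esub> \<in> carrier K"
  shows "set xs \<subseteq> carrier K \<Longrightarrow> h (seq_prod K xs) = seq_prod L (map h xs)
     \<and> seq_prod K xs \<in> carrier K"
proof (induction xs)
  case Nil
  then show ?case using h1 one by (simp add: seq_prod_Nil)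
next
  case (Cons x xs)
  then show ?case using h cl by (auto simp: seq_prod_Cons hom_def)
qed

lemma BB_hom:
  assumes "S \<in> BB K" and h: "h \<in> hom K L" and h1: "h \<one>\<^bsub>K\<^esub> = \<one>\<^bsub>L\<^esub>"
    and cl: "\<And>x y. x \<in> carrier K \<Longrightarrow> y \<in> carrier K \<Longrightarrow> x \<otimes>\<^bsub>K\<^esub> y \<in> carrier K"
    and one: "\<one>\<^bsub>K\<^esub> \<in> carrier K"
  shows "image_mset h S \<in> BB L"
proof -
  from assms(1) obtain xs where xs: "mset xs = S" "seq_prod K xs = \<one>\<^bsub>K\<^esub>"
    and sub: "set_mset S \<subseteq> carrier K"
    by (auto simp: BB_def prod_set_def)
  have "set xs \<subseteq> carrier K" using xs sub by auto
  then have "seq_prod L (map h xs) = \<one>\<^bsub>L\<^esub>"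
    using seq_prod_hom[OF h h1 cl one] xs h1 by metis
  moreover have "mset (map h xs) = image_mset h S" using xs by simp
  moreover have "set_mset (image_mset h S) \<subseteq> carrier L"
    using sub h by (auto simp: hom_def)
  ultimately show ?thesis using BB_intro by metis
qed

lemma in_rep: "x \<in># repeat_mset m M \<Longrightarrow> x \<in># M"
  by (metis count_repeat_mset mult_0_right not_in_iff)

lemma filter_rep: "filter_mset P (replicate_mset k x) = (if P x then replicate_mset k x else {#})"
  by (induction k) auto


lemma qgrp_intro: "A \<in> H \<Longrightarrow> B \<in> H \<Longrightarrow> x = (\<lambda>g. emb A g - emb B g) \<Longrightarrow> x \<in> qgrp H"
  unfolding qgrp_def by auto

lemma seq_prod_sub: "seq_prod (G\<lparr>carrier := H\<rparr>) = seq_prod G"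
  by (simp add: seq_prod_def fun_eq_iff)

lemma BB_sub: "H \<subseteq> carrier G \<Longrightarrow> BB (G\<lparr>carrier := H\<rparr>) \<subseteq> BB G"
  by (auto simp: BB_def prod_set_def seq_prod_sub)

lemma BB_sub2: "S \<in> BB G \<Longrightarrow> set_mset S \<subseteq> H \<Longrightarrow> S \<in> BB (G\<lparr>carrier := H\<rparr>)"
  by (auto simp: BB_def prod_set_def seq_prod_sub)

fun gg :: "(nat \<times> bool) list \<Rightarrow> int" where
  "gg [] = 0"
| "gg (x # xs) = (if x = dih_b then - gg xs else 1 + gg xs)"

lemma dih_mult: "(i, s) \<otimes>\<^bsub>dihedral n\<^esub> (j, t) = ((if s then i + n - j else i + j) mod n, s \<noteq> t)"
  by (simp add: dihedral_def)

lemma dih_one: "\<one>\<^bsub>dihedral n\<^esub> = (0, False)"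
  by (simp add: dihedral_def)

lemma dih_a_eq: "n \<ge> 3 \<Longrightarrow> dih_a n = (1, False)"
  by (simp add: dih_a_def)

lemma dih_formula:
  assumes "n \<ge> 3"
  shows "set xs \<subseteq> {dih_a n, dih_b} \<Longrightarrow>
    seq_prod (dihedral n) xs = (nat (gg xs mod int n), odd (length (filter (\<lambda>x. x = dih_b) xs)))"
proof (induction xs)
  case Nil
  then show ?case by (simp add: seq_prod_Nil dih_one)
next
  case (Cons x xs)
  have n0: "n > 0" using assms by simp
  define p where "p = nat (gg xs mod int n)"
  define c where "c = odd (length (filter (\<lambda>x. x = dih_b) xs))"
  have p: "p < n" "int p = gg xs mod int n" using n0 unfolding p_def
    by (simp_all add: nat_less_iff)
  have IH: "seq_prod (dihedral n) xs = (p, c)" using Cons by (simp add: p_def c_def)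
  show ?case
  proof (cases "x = dih_b")
    case True
    have "(n - p) mod n = nat ((- gg xs) mod int n)"
    proof -
      have "int ((n - p) mod n) = (int n - int p) mod int n"
        using p by (simp add: of_nat_diff zmod_int)
      also have "\<dots> = (- gg xs) mod int n" using p
        by (simp add: mod_diff_right_eq mod_minus_eq)
      finally show ?thesis by (metis nat_int)
    qed
    moreover have "seq_prod (dihedral n) (x # xs) = (0, True) \<otimes>\<^bsub>dihedral n\<^esub> (p, c)"
      using True IH by (simp add: seq_prod_Cons dih_b_def)
    moreover have "(0::nat, True) \<otimes>\<^bsub>dihedral n\<^esub> (p, c) = ((n - p) mod n, \<not> c)"
      by (simp add: dih_mult)
    ultimately show ?thesis using True by (simp add: c_def)
  next
    case False
    then have x: "x = (1, False)" using Cons dih_a_eq[OF assms] by auto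
    have "(1 + p) mod n = nat ((1 + gg xs) mod int n)"
    proof -
      have "int ((1 + p) mod n) = (1 + int p) mod int n"
        by (simp add: zmod_int)
      also have "\<dots> = (1 + gg xs) mod int n" using p by (simp add: mod_add_right_eq)
      finally show ?thesis by (metis nat_int)
    qed
    moreover have "seq_prod (dihedral n) (x # xs) = (1, False) \<otimes>\<^bsub>dihedral n\<^esub> (p, c)"
      using x IH by (simp add: seq_prod_Cons)
    moreover have "(1::nat, False) \<otimes>\<^bsub>dihedral n\<^esub> (p, c) = ((1 + p) mod n, c)"
      by (simp add: dih_mult)
    ultimately show ?thesis using False by (simp add: c_def)
  qed
qed

lemma gg_bound: "\<bar>gg xs\<bar> \<le> int (length (filter (\<lambda>x. x \<noteq> dih_b) xs))
   \<and> even (gg xs + int (length (filter (\<lambda>x. x \<noteq> dih_b) xs)))"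
  by (induction xs) auto

lemma gg_rep: "gg (replicate m (dih_a n) @ ys) = int m + gg ys"
  by (induction m) (auto simp: dih_a_def dih_b_def)

lemma dih_carrier: "n \<ge> 3 \<Longrightarrow> dih_a n \<in> carrier (dihedral n) \<and> dih_b \<in> carrier (dihedral n)"
  by (simp add: dihedral_def dih_a_def dih_b_def)

lemma dih_closed: "n \<ge> 3 \<Longrightarrow> x \<in> carrier (dihedral n) \<Longrightarrow> y \<in> carrier (dihedral n)
   \<Longrightarrow> x \<otimes>\<^bsub>dihedral n\<^esub> y \<in> carrier (dihedral n)"
  by (cases x; cases y) (simp add: dihedral_def)

lemma dih_idem: assumes "n \<ge> 3" "x \<in> carrier (dihedral n)" "x \<otimes>\<^bsub>dihedral n\<^esub> x = x"
  shows "x = \<one>\<^bsub>dihedral n\<^esub>"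
proof -
  obtain i s where x: "x = (i, s)" by force
  have i: "i < n" using assms(2) x by (simp add: dihedral_def)
  have "s = False" using assms(3) x by (simp add: dih_mult)
  then have "(i + i) mod n = i" using assms(3) x by (simp add: dih_mult)
  then have eq: "(i + i) mod n = i" .
  have "i = 0"
  proof (cases "i + i < n")
    case True
    then show ?thesis using eq by simp
  next
    case False
    then have "(i + i) mod n = i + i - n" using i by (simp add: le_mod_geq)
    then show ?thesis using eq i by linarith
  qed
  then show ?thesis using x \<open>s = False\<close> by (simp add: dih_one)
qed

lemma t1: fixes a b :: 'a assumes ab: "a \<noteq> b"
  shows "mset (replicate (5 * q + 3) a @ b # replicate q a @ [b, b, b, b, b]) = replicate_mset (6*q+3) a + replicate_mset 6 b"
  using ab by (simp add: multiset_eq_iff)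

lemma t2: fixes a b :: 'a assumes ab: "a \<noteq> b"
  shows "repeat_mset 3 (replicate_mset (2*q+1) a + replicate_mset 2 b) = replicate_mset (6*q+3) a + replicate_mset 6 b"
  using ab by (simp add: multiset_eq_iff)

theorem mainTheorem9:
  fixes n :: nat
  assumes "n \<ge> 3" and "n mod 4 = 3"
  defines "S \<equiv> replicate_mset ((n - 1) div 2) (dih_a n) + replicate_mset 2 dih_b"
  shows "emb S \<in> qgrp (BB (dihedral n)) \<and> S \<notin> BB (dihedral n)
      \<and> repeat_mset 2 S \<in> BB (dihedral n) \<and> repeat_mset 3 S \<in> BB (dihedral n)
      \<and> (\<forall>G :: 'g monoid. group G \<and> finite (carrier G)
            \<and> (\<exists>H. subgroup H G \<and> G\<lparr>carrier := H\<rparr> \<cong> dihedral n)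
            \<longrightarrow> \<not> seminormal (BB G))"
proof -
  define q where "q = n div 4"
  have q: "n = 4 * q + 3" using assms(2) div_mult_mod_eq[of n 4] unfolding q_def by linarith
  define k where "k = (n - 1) div 2"
  have k: "k = 2 * q + 1" using q unfolding k_def by simp
  define a where "a = dih_a n"
  define b where "b = dih_b"
  have ab: "a \<noteq> b" using assms(1) by (simp add: a_def b_def dih_a_def dih_b_def)
  have Sdef: "S = replicate_mset k a + replicate_mset 2 b"
    unfolding S_def k_def a_def b_def by simp
  have carr: "a \<in> carrier (dihedral n)" "b \<in> carrier (dihedral n)"
    using dih_carrier[OF assms(1)] by (simp_all add: a_def b_def)
  have Scarr: "set_mset (repeat_mset m S) \<subseteq> carrier (dihedral n)" for m
  proof -
    have "set_mset S \<subseteq> carrier (dihedral n)" using carr by (auto simp: Sdef)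
    then show ?thesis by (auto dest: in_rep)
  qed
  have form: "set xs \<subseteq> {a, b} \<Longrightarrow>
    seq_prod (dihedral n) xs = (nat (gg xs mod int n), odd (length (filter (\<lambda>x. x = b) xs)))" for xs
    using dih_formula[OF assms(1)] by (simp add: a_def b_def)
  have notB: "S \<notin> BB (dihedral n)"
  proof
    assume "S \<in> BB (dihedral n)"
    then obtain xs where xs: "mset xs = S" "seq_prod (dihedral n) xs = \<one>\<^bsub>(dihedral n)\<^esub>"
      by (auto simp: BB_def prod_set_def)
    have "set xs = set_mset S" using xs(1) by (metis set_mset_mset)
    then have sx: "set xs \<subseteq> {a, b}" by (auto simp: Sdef)
    have "nat (gg xs mod int n) = 0" using form[OF sx] xs(2) by (simp add: dih_one)
    moreover have "gg xs mod int n \<ge> 0" using assms(1) by simp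
    ultimately have m0: "gg xs mod int n = 0" by linarith
    have "length (filter (\<lambda>x. x \<noteq> dih_b) xs) = size (filter_mset (\<lambda>x. x \<noteq> b) (mset xs))"
      unfolding b_def by (metis mset_filter size_mset)
    also have "\<dots> = k" using ab by (simp add: xs(1) Sdef filter_rep)
    finally have len: "length (filter (\<lambda>x. x \<noteq> dih_b) xs) = k" .
    have bd: "\<bar>gg xs\<bar> \<le> int k" "even (gg xs + int k)" using gg_bound[of xs] len by auto
    have dv: "int n dvd gg xs" using m0 by (simp add: dvd_eq_mod_eq_0)
    have lt: "\<bar>gg xs\<bar> < int n" using bd k q by linarith
    have "gg xs = 0"
    proof (rule ccontr)
      assume "gg xs \<noteq> 0"
      then have "\<bar>int n\<bar> \<le> \<bar>gg xs\<bar>" using dvd_imp_le_int dv by blast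
      then show False using lt by linarith
    qed
    then show False using bd(2) k by simp
  qed
  have S2: "repeat_mset 2 S \<in> BB (dihedral n)"
  proof -
    define xs where "xs = replicate k a @ b # replicate k a @ [b, b, b]"
    have sx: "set xs \<subseteq> {a, b}" by (auto simp: xs_def)
    have g: "gg xs = 0" unfolding xs_def a_def b_def
      by (simp add: gg_rep)
    have f: "length (filter (\<lambda>x. x = b) xs) = 4" using ab by (simp add: xs_def)
    have "seq_prod (dihedral n) xs = \<one>\<^bsub>(dihedral n)\<^esub>" using form[OF sx] g f by (simp add: dih_one)
    moreover have "mset xs = repeat_mset 2 S"
      by (simp add: xs_def Sdef multiset_eq_iff numeral_2_eq_2)
    ultimately show ?thesis using Scarr[of 2] BB_intro by metis
  qed
  have S3: "repeat_mset 3 S \<in> BB (dihedral n)"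
  proof -
    define xs where "xs = replicate (5 * q + 3) a @ b # replicate q a @ [b, b, b, b, b]"
    have sx: "set xs \<subseteq> {a, b}" by (auto simp: xs_def)
    have "gg xs = int (5 * q + 3) - int q" unfolding xs_def a_def b_def
      by (simp add: gg_rep)
    then have g: "gg xs = int n" using q by simp
    have f: "length (filter (\<lambda>x. x = b) xs) = 6" using ab by (simp add: xs_def)
    have "int n mod int n = 0" by simp
    then have "nat (gg xs mod int n) = 0" using g by simp
    moreover have "\<not> odd (length (filter (\<lambda>x. x = b) xs))" using f by simp
    ultimately have "seq_prod (dihedral n) xs = \<one>\<^bsub>(dihedral n)\<^esub>" using form[OF sx]
      by (simp add: dih_one)
    moreover have "mset xs = repeat_mset 3 S"
      unfolding xs_def Sdef k using t1[OF ab, of q] t2[OF ab, of q] by simp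
    ultimately show ?thesis using Scarr[of 3] BB_intro by metis
  qed
  have embq: "emb S = (\<lambda>g. emb (repeat_mset 3 S) g - emb (repeat_mset 2 S) g)"
    by (simp add: emb_def fun_eq_iff)
  have part1: "emb S \<in> qgrp (BB (dihedral n))"
    using qgrp_intro[OF S3 S2 embq] .
  have part5: "\<not> seminormal (BB G)"
    if G: "group G" and H: "subgroup H G" and iso: "G\<lparr>carrier := H\<rparr> \<cong> (dihedral n)" for G :: "'g monoid" and H
  proof -
    define GH where "GH = G\<lparr>carrier := H\<rparr>"
    have gGH: "group GH" unfolding GH_def using subgroup.subgroup_is_group[OF H G] .
    obtain \<phi> where phi: "\<phi> \<in> iso GH (dihedral n)" using iso unfolding is_iso_def GH_def by blast
    have cGH: "carrier GH = H" by (simp add: GH_def)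
    define \<psi> where "\<psi> = inv_into H \<phi>"
    have psi: "\<psi> \<in> iso (dihedral n) GH" using group.iso_set_sym[OF gGH phi] cGH by (simp add: \<psi>_def)
    have phihom: "\<phi> \<in> hom GH (dihedral n)" and psihom: "\<psi> \<in> hom (dihedral n) GH"
      using phi psi by (simp_all add: iso_def)
    have bij: "bij_betw \<phi> H (carrier (dihedral n))" using phi cGH by (simp add: iso_def)
    have oneH: "\<one>\<^bsub>GH\<^esub> \<in> H" using gGH cGH by (metis group.is_monoid monoid.one_closed)
    have phi1: "\<phi> \<one>\<^bsub>GH\<^esub> = \<one>\<^bsub>(dihedral n)\<^esub>"
    proof -
      have c: "\<phi> \<one>\<^bsub>GH\<^esub> \<in> carrier (dihedral n)" using phihom oneH cGH by (auto simp: hom_def)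
      have "\<phi> \<one>\<^bsub>GH\<^esub> \<otimes>\<^bsub>(dihedral n)\<^esub> \<phi> \<one>\<^bsub>GH\<^esub> = \<phi> (\<one>\<^bsub>GH\<^esub> \<otimes>\<^bsub>GH\<^esub> \<one>\<^bsub>GH\<^esub>)"
        using phihom oneH cGH by (simp add: hom_def)
      also have "\<dots> = \<phi> \<one>\<^bsub>GH\<^esub>" using gGH by (simp add: group.is_monoid monoid.l_one oneH cGH)
      finally show ?thesis using dih_idem[OF assms(1)] c by (simp add:)
    qed
    have psi1: "\<psi> \<one>\<^bsub>(dihedral n)\<^esub> = \<one>\<^bsub>GH\<^esub>"
      using phi1 bij oneH unfolding \<psi>_def by (metis bij_betw_def inv_into_f_f)
    have clD: "\<And>x y. x \<in> carrier (dihedral n) \<Longrightarrow> y \<in> carrier (dihedral n) \<Longrightarrow> x \<otimes>\<^bsub>(dihedral n)\<^esub> y \<in> carrier (dihedral n)"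
      using dih_closed[OF assms(1)] by simp
    have oneD: "\<one>\<^bsub>(dihedral n)\<^esub> \<in> carrier (dihedral n)" using assms(1) by (simp add: dihedral_def)
    have clGH: "\<And>x y. x \<in> carrier GH \<Longrightarrow> y \<in> carrier GH \<Longrightarrow> x \<otimes>\<^bsub>GH\<^esub> y \<in> carrier GH"
      using gGH by (meson group.is_monoid monoid.m_closed)
    have HG: "H \<subseteq> carrier G" using H by (rule subgroup.subset)
    define T where "T = image_mset \<psi> S"
    have rep: "image_mset \<psi> (repeat_mset m S) = repeat_mset m T" for m
      unfolding T_def by (induction m) auto
    have T2: "repeat_mset 2 T \<in> BB G"
      using BB_hom[OF S2 psihom psi1 clD oneD] BB_sub[OF HG] rep by (auto simp: GH_def)
    have T3: "repeat_mset 3 T \<in> BB G"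
      using BB_hom[OF S3 psihom psi1 clD oneD] BB_sub[OF HG] rep by (auto simp: GH_def)
    have TH: "set_mset T \<subseteq> H"
      using psihom Scarr[of 1] cGH by (auto simp: T_def hom_def Sdef)
    have TnB: "T \<notin> BB G"
    proof
      assume "T \<in> BB G"
      then have "T \<in> BB GH" using BB_sub2 TH by (simp add: GH_def)
      then have "image_mset \<phi> T \<in> BB (dihedral n)"
        using BB_hom[OF _ phihom phi1 clGH] gGH by (meson group.is_monoid monoid.one_closed)
      moreover have "image_mset \<phi> T = S"
      proof -
        have "\<forall>y \<in> set_mset S. \<phi> (\<psi> y) = y"
          using Scarr[of 1] bij unfolding \<psi>_def by (auto simp: bij_betw_def f_inv_into_f)
        then show ?thesis unfolding T_def by (simp add: multiset.map_comp o_def multiset.map_ident_strong)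
      qed
      ultimately show False using notB by simp
    qed
    have "emb T = (\<lambda>g. emb (repeat_mset 3 T) g - emb (repeat_mset 2 T) g)"
      by (simp add: emb_def fun_eq_iff)
    then have qT: "emb T \<in> qgrp (BB G)" using qgrp_intro[OF T3 T2] by blast
    have "(\<lambda>g. 2 * emb T g) = emb (repeat_mset 2 T)" by (simp add: emb_def fun_eq_iff)
    then have c2: "(\<lambda>g. 2 * emb T g) \<in> emb ` BB G" using T2 by (metis imageI)
    have "(\<lambda>g. 3 * emb T g) = emb (repeat_mset 3 T)" by (simp add: emb_def fun_eq_iff)
    then have c3: "(\<lambda>g. 3 * emb T g) \<in> emb ` BB G" using T3 by (metis imageI)
    have nT: "emb T \<notin> emb ` BB G"
    proof
      assume "emb T \<in> emb ` BB G"
      then obtain A where A: "A \<in> BB G" "emb T = emb A" by (rule imageE)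
      then have "T = A" by (simp add: emb_def fun_eq_iff multiset_eq_iff)
      then show False using A TnB by simp
    qed
    show ?thesis
    proof
      assume "seminormal (BB G)"
      then have "\<forall>x \<in> qgrp (BB G).
          (\<lambda>g. 2 * x g) \<in> emb ` BB G \<and> (\<lambda>g. 3 * x g) \<in> emb ` BB G \<longrightarrow> x \<in> emb ` BB G"
        by (simp only: seminormal_def)
      from mp[OF bspec[OF this qT] conjI[OF c2 c3]] show False using nT by contradiction
    qed
  qed
  show ?thesis
  proof (intro conjI allI impI)
    show "emb S \<in> qgrp (BB (dihedral n))" using part1 .
    show "S \<notin> BB (dihedral n)" using notB .
    show "repeat_mset 2 S \<in> BB (dihedral n)" using S2 .
    show "repeat_mset 3 S \<in> BB (dihedral n)" using S3 .
    fix G :: "'g monoid"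
    assume "group G \<and> finite (carrier G) \<and> (\<exists>H. subgroup H G \<and> G\<lparr>carrier := H\<rparr> \<cong> dihedral n)"
    then have gG: "group G" and ex: "\<exists>H. subgroup H G \<and> G\<lparr>carrier := H\<rparr> \<cong> dihedral n"
      by (simp_all only:)
    from ex obtain H where HH: "subgroup H G \<and> G\<lparr>carrier := H\<rparr> \<cong> dihedral n" ..
    show "\<not> seminormal (BB G)" using part5[OF gG conjunct1[OF HH] conjunct2[OF HH]] .
  qed
qed

end
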